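(* Let $\mathbf{C}$ be a locally small category, $\Omega$ an object, $\Phi\colon\mathbf{C}^{\mathrm{op}}\to\mathbf{Pos}$ a functor whose fibres have all meets preserved by reindexing $f^*=\Phi f$, and $d_\Omega\in\Phi\Omega$. Let $\alpha_Y(S)=\bigwedge_{k\in S}k^*(d_\Omega)$, $\gamma_Y(d)=\{k\in\mathbf{C}(Y,\Omega)\mid d\preceq k^*(d_\Omega)\}$ and $\mathrm{cl}_Y=\gamma_Y\circ\alpha_Y$. Let $F\colon\mathbf{C}\to\mathbf{C}$ be a functor, $(\mathit{ev}_\lambda\colon F\Omega\to\Omega)_{\lambda\in\Lambda}$ morphisms, $\Lambda_Y(S)=\{\mathit{ev}_\lambda\circ Fh\mid\lambda\in\Lambda,h\in S\}$, and $\mathcal{K}_X=\alpha_{FX}\circ\Lambda_X\circ\gamma_X\colon\Phi X\to\Phi(FX)$. Let $\mathrm{cl}'_X$ be a closure operator on $(\mathcal{P}(\mathbf{C}(X,\Omega)),\subseteq)$ with $\mathrm{cl}'_X\subseteq\mathrm{cl}_X$ pointwise. Then $\mathrm{cl}'_X$ is compatible (i.e. $\Lambda_X\circ\mathrm{cl}'_X\circ\mathrm{cl}_X\subseteq\mathrm{cl}_{FX}\circ\Lambda_X\circ\mathrm{cl}'_X$ pointwise) if and only if the depth-1 self-separation property holds: for every $d\in\Phi X$ and every $S\subseteq\mathbf{C}(X,\Omega)$ with $S=\mathrm{cl}'_X(S)$ and $\alpha_X(S)=d$, we have $\alpha_{FX}(\Lambda_X(S))=\mathcal{K}_X(d)$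.
   Context: A closure operator is a monotone, idempotent, extensive map. A set $S$ of predicates is called initial for $d$ if $\alpha_X(S)=d$. *)

theory Defs
  imports Main
begin

record ('o, 'a) cat =
  cObj  :: "'o set"
  cArr  :: "'a set"
  cDom  :: "'a \<Rightarrow> 'o"
  cCod  :: "'a \<Rightarrow> 'o"
  cComp :: "'a \<Rightarrow> 'a \<Rightarrow> 'a"   (* cComp C g f = g \<circ> f *)
  cId   :: "'o \<Rightarrow> 'a"

definition category :: "('o, 'a) cat \<Rightarrow> bool" where
  "category C \<longleftrightarrow>
     (\<forall>f\<in>cArr C. cDom C f \<in> cObj C \<and> cCod C f \<in> cObj C) \<and>
     (\<forall>a\<in>cObj C. cId C a \<in> cArr C \<and> cDom C (cId C a) = a \<and> cCod C (cId C a) = a) \<and>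
     (\<forall>f\<in>cArr C. \<forall>g\<in>cArr C. cCod C f = cDom C g \<longrightarrow>
        cComp C g f \<in> cArr C \<and> cDom C (cComp C g f) = cDom C f \<and> cCod C (cComp C g f) = cCod C g) \<and>
     (\<forall>f\<in>cArr C. cComp C f (cId C (cDom C f)) = f \<and> cComp C (cId C (cCod C f)) f = f) \<and>
     (\<forall>f\<in>cArr C. \<forall>g\<in>cArr C. \<forall>h\<in>cArr C. cCod C f = cDom C g \<longrightarrow> cCod C g = cDom C h \<longrightarrow>
        cComp C h (cComp C g f) = cComp C (cComp C h g) f)"

definition hom :: "('o, 'a) cat \<Rightarrow> 'o \<Rightarrow> 'o \<Rightarrow> 'a set" where
  "hom C x y = {f \<in> cArr C. cDom C f = x \<and> cCod C f = y}"

definition endofunctor :: "('o, 'a) cat \<Rightarrow> ('o \<Rightarrow> 'o) \<Rightarrow> ('a \<Rightarrow> 'a) \<Rightarrow> bool" where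
  "endofunctor C Fo Fa \<longleftrightarrow>
     (\<forall>a\<in>cObj C. Fo a \<in> cObj C) \<and>
     (\<forall>f\<in>cArr C. Fa f \<in> cArr C \<and> cDom C (Fa f) = Fo (cDom C f) \<and> cCod C (Fa f) = Fo (cCod C f)) \<and>
     (\<forall>a\<in>cObj C. Fa (cId C a) = cId C (Fo a)) \<and>
     (\<forall>f\<in>cArr C. \<forall>g\<in>cArr C. cCod C f = cDom C g \<longrightarrow> Fa (cComp C g f) = cComp C (Fa g) (Fa f))"

record ('o, 'a, 'p) pfun =
  fib :: "'o \<Rightarrow> 'p set"
  fle :: "'o \<Rightarrow> 'p \<Rightarrow> 'p \<Rightarrow> bool"
  rix :: "'a \<Rightarrow> 'p \<Rightarrow> 'p"           (* reindexing f^* = \<Phi> f : \<Phi>(cod f) \<rightarrow> \<Phi>(dom f) *)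

definition is_glb :: "('o, 'a, 'p) pfun \<Rightarrow> 'o \<Rightarrow> 'p set \<Rightarrow> 'p \<Rightarrow> bool" where
  "is_glb \<Phi> a A m \<longleftrightarrow> m \<in> fib \<Phi> a \<and> (\<forall>x\<in>A. fle \<Phi> a m x) \<and>
     (\<forall>y\<in>fib \<Phi> a. (\<forall>x\<in>A. fle \<Phi> a y x) \<longrightarrow> fle \<Phi> a y m)"

definition meet :: "('o, 'a, 'p) pfun \<Rightarrow> 'o \<Rightarrow> 'p set \<Rightarrow> 'p" where
  "meet \<Phi> a A = (THE m. is_glb \<Phi> a A m)"

definition poset_functor :: "('o, 'a) cat \<Rightarrow> ('o, 'a, 'p) pfun \<Rightarrow> bool" where
  "poset_functor C \<Phi> \<longleftrightarrow>
     (\<forall>a\<in>cObj C. (\<forall>x\<in>fib \<Phi> a. fle \<Phi> a x x) \<and>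
        (\<forall>x\<in>fib \<Phi> a. \<forall>y\<in>fib \<Phi> a. fle \<Phi> a x y \<longrightarrow> fle \<Phi> a y x \<longrightarrow> x = y) \<and>
        (\<forall>x\<in>fib \<Phi> a. \<forall>y\<in>fib \<Phi> a. \<forall>z\<in>fib \<Phi> a. fle \<Phi> a x y \<longrightarrow> fle \<Phi> a y z \<longrightarrow> fle \<Phi> a x z)) \<and>
     (\<forall>f\<in>cArr C. \<forall>p\<in>fib \<Phi> (cCod C f). rix \<Phi> f p \<in> fib \<Phi> (cDom C f)) \<and>
     (\<forall>f\<in>cArr C. \<forall>p\<in>fib \<Phi> (cCod C f). \<forall>q\<in>fib \<Phi> (cCod C f).
        fle \<Phi> (cCod C f) p q \<longrightarrow> fle \<Phi> (cDom C f) (rix \<Phi> f p) (rix \<Phi> f q)) \<and>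
     (\<forall>a\<in>cObj C. \<forall>p\<in>fib \<Phi> a. rix \<Phi> (cId C a) p = p) \<and>
     (\<forall>f\<in>cArr C. \<forall>g\<in>cArr C. cCod C f = cDom C g \<longrightarrow>
        (\<forall>p\<in>fib \<Phi> (cCod C g). rix \<Phi> (cComp C g f) p = rix \<Phi> f (rix \<Phi> g p)))"

definition meets_preserved :: "('o, 'a) cat \<Rightarrow> ('o, 'a, 'p) pfun \<Rightarrow> bool" where
  "meets_preserved C \<Phi> \<longleftrightarrow>
     (\<forall>a\<in>cObj C. \<forall>A. A \<subseteq> fib \<Phi> a \<longrightarrow> (\<exists>m. is_glb \<Phi> a A m)) \<and>
     (\<forall>f\<in>cArr C. \<forall>A. A \<subseteq> fib \<Phi> (cCod C f) \<longrightarrow>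
        rix \<Phi> f (meet \<Phi> (cCod C f) A) = meet \<Phi> (cDom C f) (rix \<Phi> f ` A))"

definition alpha :: "('o, 'a, 'p) pfun \<Rightarrow> 'p \<Rightarrow> 'o \<Rightarrow> 'a set \<Rightarrow> 'p" where
  "alpha \<Phi> dO Y S = meet \<Phi> Y ((\<lambda>k. rix \<Phi> k dO) ` S)"

definition gamma :: "('o, 'a) cat \<Rightarrow> ('o, 'a, 'p) pfun \<Rightarrow> 'o \<Rightarrow> 'p \<Rightarrow> 'o \<Rightarrow> 'p \<Rightarrow> 'a set" where
  "gamma C \<Phi> Om dO Y d = {k \<in> hom C Y Om. fle \<Phi> Y d (rix \<Phi> k dO)}"

definition clo :: "('o, 'a) cat \<Rightarrow> ('o, 'a, 'p) pfun \<Rightarrow> 'o \<Rightarrow> 'p \<Rightarrow> 'o \<Rightarrow> 'a set \<Rightarrow> 'a set" where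
  "clo C \<Phi> Om dO Y S = gamma C \<Phi> Om dO Y (alpha \<Phi> dO Y S)"

definition Lift :: "('o, 'a) cat \<Rightarrow> ('a \<Rightarrow> 'a) \<Rightarrow> ('l \<Rightarrow> 'a) \<Rightarrow> 'l set \<Rightarrow> 'a set \<Rightarrow> 'a set" where
  "Lift C Fa ev Lam S = {cComp C (ev l) (Fa h) | l h. l \<in> Lam \<and> h \<in> S}"

definition Kop :: "('o, 'a) cat \<Rightarrow> ('o, 'a, 'p) pfun \<Rightarrow> 'o \<Rightarrow> 'p \<Rightarrow> ('o \<Rightarrow> 'o) \<Rightarrow> ('a \<Rightarrow> 'a)
                   \<Rightarrow> ('l \<Rightarrow> 'a) \<Rightarrow> 'l set \<Rightarrow> 'o \<Rightarrow> 'p \<Rightarrow> 'p" where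
  "Kop C \<Phi> Om dO Fo Fa ev Lam X d =
     alpha \<Phi> dO (Fo X) (Lift C Fa ev Lam (gamma C \<Phi> Om dO X d))"

definition closure_operator_on :: "'a set \<Rightarrow> ('a set \<Rightarrow> 'a set) \<Rightarrow> bool" where
  "closure_operator_on H c \<longleftrightarrow>
     (\<forall>S. S \<subseteq> H \<longrightarrow> c S \<subseteq> H) \<and>
     (\<forall>S. S \<subseteq> H \<longrightarrow> S \<subseteq> c S) \<and>
     (\<forall>S T. S \<subseteq> T \<longrightarrow> T \<subseteq> H \<longrightarrow> c S \<subseteq> c T) \<and>
     (\<forall>S. S \<subseteq> H \<longrightarrow> c (c S) = c S)"

end

theory Submission
  imports Defs
begin

lemma pf_refl: "poset_functor C \<Phi> \<Longrightarrow> a \<in> cObj C \<Longrightarrow> x \<in> fib \<Phi> a \<Longrightarrow> fle \<Phi> a x x"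
  unfolding poset_functor_def by (drule conjunct1) blast
lemma pf_antisym: "poset_functor C \<Phi> \<Longrightarrow> a \<in> cObj C \<Longrightarrow> x \<in> fib \<Phi> a \<Longrightarrow> y \<in> fib \<Phi> a \<Longrightarrow> fle \<Phi> a x y \<Longrightarrow> fle \<Phi> a y x \<Longrightarrow> x = y"
  unfolding poset_functor_def by (drule conjunct1) blast
lemma pf_trans: "poset_functor C \<Phi> \<Longrightarrow> a \<in> cObj C \<Longrightarrow> x \<in> fib \<Phi> a \<Longrightarrow> y \<in> fib \<Phi> a \<Longrightarrow> z \<in> fib \<Phi> a \<Longrightarrow> fle \<Phi> a x y \<Longrightarrow> fle \<Phi> a y z \<Longrightarrow> fle \<Phi> a x z"
  unfolding poset_functor_def by (drule conjunct1) blast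
lemma pf_rix: "poset_functor C \<Phi> \<Longrightarrow> f \<in> cArr C \<Longrightarrow> p \<in> fib \<Phi> (cCod C f) \<Longrightarrow> rix \<Phi> f p \<in> fib \<Phi> (cDom C f)"
  unfolding poset_functor_def by (drule conjunct2, drule conjunct1) blast

lemma glb_alpha:
  assumes pf: "poset_functor C \<Phi>" and mp: "meets_preserved C \<Phi>"
    and Y: "Y \<in> cObj C" and dO: "dO \<in> fib \<Phi> Om" and S: "S \<subseteq> hom C Y Om"
  shows "is_glb \<Phi> Y ((\<lambda>k. rix \<Phi> k dO) ` S) (alpha \<Phi> dO Y S)"
proof -
  have sub: "(\<lambda>k. rix \<Phi> k dO) ` S \<subseteq> fib \<Phi> Y"
  proof
    fix x assume "x \<in> (\<lambda>k. rix \<Phi> k dO) ` S"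
    then obtain k where k: "k \<in> S" "x = rix \<Phi> k dO" by blast
    then have "k \<in> cArr C" "cDom C k = Y" "cCod C k = Om" using S by (auto simp: hom_def)
    then show "x \<in> fib \<Phi> Y" using pf_rix[OF pf, of k dO] dO k by simp
  qed
  then obtain m where m: "is_glb \<Phi> Y ((\<lambda>k. rix \<Phi> k dO) ` S) m"
    using mp Y unfolding meets_preserved_def by blast
  have uniq: "m' = m" if "is_glb \<Phi> Y ((\<lambda>k. rix \<Phi> k dO) ` S) m'" for m'
  proof -
    have a: "fle \<Phi> Y m' m" "fle \<Phi> Y m m'" "m \<in> fib \<Phi> Y" "m' \<in> fib \<Phi> Y"
      using that m unfolding is_glb_def by auto
    then show ?thesis using pf_antisym[OF pf Y] by blast
  qed
  have "alpha \<Phi> dO Y S = m" unfolding alpha_def meet_def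
    using m uniq by (rule the_equality)
  then show ?thesis using m by simp
qed

lemma glb_in: "is_glb P a A m \<Longrightarrow> m \<in> fib P a" unfolding is_glb_def by (elim conjE)
lemma glb_lb: "is_glb P a A m \<Longrightarrow> x \<in> A \<Longrightarrow> fle P a m x" unfolding is_glb_def by (elim conjE) (erule bspec)
lemma glb_gr: "is_glb P a A m \<Longrightarrow> y \<in> fib P a \<Longrightarrow> (\<And>x. x \<in> A \<Longrightarrow> fle P a y x) \<Longrightarrow> fle P a y m"
  unfolding is_glb_def by (elim conjE) blast

lemma alpha_fib:
  assumes "poset_functor C \<Phi>" "meets_preserved C \<Phi>"
    "Y \<in> cObj C" "dO \<in> fib \<Phi> Om" "S \<subseteq> hom C Y Om"
  shows "alpha \<Phi> dO Y S \<in> fib \<Phi> Y"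
  using glb_alpha[OF assms] by (rule glb_in)

lemma galois:
  assumes pf: "poset_functor C \<Phi>" and mp: "meets_preserved C \<Phi>"
    and Y: "Y \<in> cObj C" and dO: "dO \<in> fib \<Phi> Om" and S: "S \<subseteq> hom C Y Om"
    and d: "d \<in> fib \<Phi> Y"
  shows "S \<subseteq> gamma C \<Phi> Om dO Y d \<longleftrightarrow> fle \<Phi> Y d (alpha \<Phi> dO Y S)"
proof
  assume "S \<subseteq> gamma C \<Phi> Om dO Y d"
  then have "\<And>x. x \<in> (\<lambda>k. rix \<Phi> k dO) ` S \<Longrightarrow> fle \<Phi> Y d x" unfolding gamma_def by blast
  then show "fle \<Phi> Y d (alpha \<Phi> dO Y S)" by (rule glb_gr[OF glb_alpha[OF pf mp Y dO S] d])
next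
  assume h: "fle \<Phi> Y d (alpha \<Phi> dO Y S)"
  show "S \<subseteq> gamma C \<Phi> Om dO Y d"
  proof
    fix k assume k: "k \<in> S"
    have g: "is_glb \<Phi> Y ((\<lambda>k. rix \<Phi> k dO) ` S) (alpha \<Phi> dO Y S)"
      using glb_alpha[OF pf mp Y dO S] .
    have kk: "k \<in> cArr C" "cDom C k = Y" "cCod C k = Om" using S k by (auto simp: hom_def)
    then have r: "rix \<Phi> k dO \<in> fib \<Phi> Y" using pf_rix[OF pf, of k dO] dO by simp
    have "fle \<Phi> Y (alpha \<Phi> dO Y S) (rix \<Phi> k dO)" using glb_lb[OF g] k by blast
    moreover have "alpha \<Phi> dO Y S \<in> fib \<Phi> Y" using glb_in[OF g] .
    ultimately have "fle \<Phi> Y d (rix \<Phi> k dO)" using h d r pf_trans[OF pf Y] by blast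
    then show "k \<in> gamma C \<Phi> Om dO Y d" using S k unfolding gamma_def by blast
  qed
qed

lemma gamma_hom: "gamma C \<Phi> Om dO Y d \<subseteq> hom C Y Om"
  unfolding gamma_def by auto

lemma fle_refl:
  assumes "poset_functor C \<Phi>" "Y \<in> cObj C" "x \<in> fib \<Phi> Y"
  shows "fle \<Phi> Y x x"
  by (rule pf_refl[OF assms])

lemma fle_antisym:
  assumes "poset_functor C \<Phi>" "Y \<in> cObj C" "x \<in> fib \<Phi> Y" "y \<in> fib \<Phi> Y"
    "fle \<Phi> Y x y" "fle \<Phi> Y y x"
  shows "x = y"
  by (rule pf_antisym[OF assms])

lemma clo_ext:
  assumes "poset_functor C \<Phi>" "meets_preserved C \<Phi>"
    "Y \<in> cObj C" "dO \<in> fib \<Phi> Om" "S \<subseteq> hom C Y Om"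
  shows "S \<subseteq> clo C \<Phi> Om dO Y S"
  unfolding clo_def using galois[OF assms alpha_fib[OF assms]] fle_refl[OF assms(1,3) alpha_fib[OF assms]]
  by blast

lemma alpha_anti:
  assumes pf: "poset_functor C \<Phi>" and mp: "meets_preserved C \<Phi>"
    and Y: "Y \<in> cObj C" and dO: "dO \<in> fib \<Phi> Om" and T: "T \<subseteq> hom C Y Om" and ST: "S \<subseteq> T"
  shows "fle \<Phi> Y (alpha \<Phi> dO Y T) (alpha \<Phi> dO Y S)"
proof -
  have S: "S \<subseteq> hom C Y Om" using ST T by blast
  have "T \<subseteq> gamma C \<Phi> Om dO Y (alpha \<Phi> dO Y T)"
    using clo_ext[OF pf mp Y dO T] unfolding clo_def .
  then have "S \<subseteq> gamma C \<Phi> Om dO Y (alpha \<Phi> dO Y T)" using ST by blast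
  then show ?thesis using galois[OF pf mp Y dO S alpha_fib[OF pf mp Y dO T]] by blast
qed

lemma alpha_clo:
  assumes pf: "poset_functor C \<Phi>" and mp: "meets_preserved C \<Phi>"
    and Y: "Y \<in> cObj C" and dO: "dO \<in> fib \<Phi> Om" and S: "S \<subseteq> hom C Y Om"
  shows "alpha \<Phi> dO Y (clo C \<Phi> Om dO Y S) = alpha \<Phi> dO Y S"
proof -
  have c: "clo C \<Phi> Om dO Y S \<subseteq> hom C Y Om" unfolding clo_def by (rule gamma_hom)
  have 1: "fle \<Phi> Y (alpha \<Phi> dO Y (clo C \<Phi> Om dO Y S)) (alpha \<Phi> dO Y S)"
    using alpha_anti[OF pf mp Y dO c clo_ext[OF pf mp Y dO S]] .
  have 2: "fle \<Phi> Y (alpha \<Phi> dO Y S) (alpha \<Phi> dO Y (clo C \<Phi> Om dO Y S))"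
    using galois[OF pf mp Y dO c alpha_fib[OF pf mp Y dO S]] unfolding clo_def by blast
  show ?thesis using fle_antisym[OF pf Y alpha_fib[OF pf mp Y dO c] alpha_fib[OF pf mp Y dO S] 1 2] .
qed

lemma clo_mono:
  assumes pf: "poset_functor C \<Phi>" and mp: "meets_preserved C \<Phi>"
    and Y: "Y \<in> cObj C" and dO: "dO \<in> fib \<Phi> Om" and T: "T \<subseteq> hom C Y Om" and ST: "S \<subseteq> T"
  shows "clo C \<Phi> Om dO Y S \<subseteq> clo C \<Phi> Om dO Y T"
proof -
  have S: "S \<subseteq> hom C Y Om" using ST T by blast
  have c: "clo C \<Phi> Om dO Y S \<subseteq> hom C Y Om" unfolding clo_def by (rule gamma_hom)
  have "fle \<Phi> Y (alpha \<Phi> dO Y T) (alpha \<Phi> dO Y (clo C \<Phi> Om dO Y S))"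
    using alpha_anti[OF pf mp Y dO T ST] alpha_clo[OF pf mp Y dO S] by simp
  then show ?thesis
    using galois[OF pf mp Y dO c alpha_fib[OF pf mp Y dO T]] unfolding clo_def[of C \<Phi> Om dO Y T] by blast
qed

lemma clo_idem:
  assumes pf: "poset_functor C \<Phi>" and mp: "meets_preserved C \<Phi>"
    and Y: "Y \<in> cObj C" and dO: "dO \<in> fib \<Phi> Om" and S: "S \<subseteq> hom C Y Om"
  shows "clo C \<Phi> Om dO Y (clo C \<Phi> Om dO Y S) = clo C \<Phi> Om dO Y S"
  using alpha_clo[OF assms] unfolding clo_def[of C \<Phi> Om dO Y "clo C \<Phi> Om dO Y S"] by (simp add: clo_def)

lemma cat_comp: "category C \<Longrightarrow> f \<in> cArr C \<Longrightarrow> g \<in> cArr C \<Longrightarrow> cCod C f = cDom C g \<Longrightarrow>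
  cComp C g f \<in> cArr C \<and> cDom C (cComp C g f) = cDom C f \<and> cCod C (cComp C g f) = cCod C g"
  unfolding category_def by (drule conjunct2, drule conjunct2, drule conjunct1) blast

lemma ef_arr: "endofunctor C Fo Fa \<Longrightarrow> f \<in> cArr C \<Longrightarrow>
  Fa f \<in> cArr C \<and> cDom C (Fa f) = Fo (cDom C f) \<and> cCod C (Fa f) = Fo (cCod C f)"
  unfolding endofunctor_def by (drule conjunct2, drule conjunct1) blast

lemma ef_obj: "endofunctor C Fo Fa \<Longrightarrow> a \<in> cObj C \<Longrightarrow> Fo a \<in> cObj C"
  unfolding endofunctor_def by (drule conjunct1) blast

lemma clo_hom: "clo C \<Phi> Om dO Y S \<subseteq> hom C Y Om"
  unfolding clo_def by (rule gamma_hom)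

lemma Lift_mono: "S \<subseteq> T \<Longrightarrow> Lift C Fa ev Lam S \<subseteq> Lift C Fa ev Lam T"
  unfolding Lift_def by blast

lemma Lift_hom:
  assumes ef: "endofunctor C Fo Fa" and ev: "\<forall>l\<in>Lam. ev l \<in> hom C (Fo Om) Om"
    and cat: "category C" and S: "S \<subseteq> hom C X Om"
  shows "Lift C Fa ev Lam S \<subseteq> hom C (Fo X) Om"
proof
  fix x assume "x \<in> Lift C Fa ev Lam S"
  then obtain l h where x: "x = cComp C (ev l) (Fa h)" "l \<in> Lam" "h \<in> S" unfolding Lift_def by blast
  have h: "h \<in> cArr C" "cDom C h = X" "cCod C h = Om" using S x by (auto simp: hom_def)
  have Fh: "Fa h \<in> cArr C" "cDom C (Fa h) = Fo X" "cCod C (Fa h) = Fo Om"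
    using ef_arr[OF ef h(1)] unfolding h(2) h(3) by simp_all
  have e: "ev l \<in> cArr C" "cDom C (ev l) = Fo Om" "cCod C (ev l) = Om" using ev x by (auto simp: hom_def)
  show "x \<in> hom C (Fo X) Om" using cat_comp[OF cat Fh(1) e(1)] Fh e x unfolding hom_def by simp
qed

theorem lemma3:
  fixes C :: "('o, 'a) cat" and \<Phi> :: "('o, 'a, 'p) pfun"
    and Om X :: 'o and dO :: 'p
    and Fo :: "'o \<Rightarrow> 'o" and Fa :: "'a \<Rightarrow> 'a"
    and ev :: "'l \<Rightarrow> 'a" and Lam :: "'l set"
    and clp :: "'a set \<Rightarrow> 'a set"
  assumes "category C"
    and "poset_functor C \<Phi>"
    and "meets_preserved C \<Phi>"
    and "Om \<in> cObj C" and "X \<in> cObj C"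
    and "dO \<in> fib \<Phi> Om"
    and "endofunctor C Fo Fa"
    and "\<forall>l\<in>Lam. ev l \<in> hom C (Fo Om) Om"
    and "closure_operator_on (hom C X Om) clp"
    and "\<forall>S. S \<subseteq> hom C X Om \<longrightarrow> clp S \<subseteq> clo C \<Phi> Om dO X S"
  shows "(\<forall>S. S \<subseteq> hom C X Om \<longrightarrow>
            Lift C Fa ev Lam (clp (clo C \<Phi> Om dO X S))
              \<subseteq> clo C \<Phi> Om dO (Fo X) (Lift C Fa ev Lam (clp S)))
     \<longleftrightarrow>
         (\<forall>d\<in>fib \<Phi> X. \<forall>S. S \<subseteq> hom C X Om \<longrightarrow> S = clp S \<longrightarrow> alpha \<Phi> dO X S = d \<longrightarrow>
            alpha \<Phi> dO (Fo X) (Lift C Fa ev Lam S) = Kop C \<Phi> Om dO Fo Fa ev Lam X d)"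
    (is "?L \<longleftrightarrow> ?R")
proof -
  note cat = assms(1) and pf = assms(2) and mp = assms(3) and X = assms(5) and dO = assms(6)
    and ef = assms(7) and evh = assms(8) and co = assms(9) and sub = assms(10)
  have FX: "Fo X \<in> cObj C" using ef_obj[OF ef X] .
  have co4: "(\<forall>S. S \<subseteq> hom C X Om \<longrightarrow> clp S \<subseteq> hom C X Om) \<and>
     (\<forall>S. S \<subseteq> hom C X Om \<longrightarrow> S \<subseteq> clp S) \<and>
     (\<forall>S T. S \<subseteq> T \<longrightarrow> T \<subseteq> hom C X Om \<longrightarrow> clp S \<subseteq> clp T) \<and>
     (\<forall>S. S \<subseteq> hom C X Om \<longrightarrow> clp (clp S) = clp S)"
    using co unfolding closure_operator_on_def .
  have cl_hom: "\<And>S. S \<subseteq> hom C X Om \<Longrightarrow> clp S \<subseteq> hom C X Om"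
    using conjunct1[OF co4] by simp
  have cl_ext: "\<And>S. S \<subseteq> hom C X Om \<Longrightarrow> S \<subseteq> clp S"
    using conjunct1[OF conjunct2[OF co4]] by simp
  have cl_idem: "\<And>S. S \<subseteq> hom C X Om \<Longrightarrow> clp (clp S) = clp S"
    using conjunct2[OF conjunct2[OF conjunct2[OF co4]]] by simp
  let ?cl = "clo C \<Phi> Om dO X"
  let ?clF = "clo C \<Phi> Om dO (Fo X)"
  let ?Li = "Lift C Fa ev Lam"
  have clh: "\<And>S. ?cl S \<subseteq> hom C X Om" unfolding clo_def by (rule gamma_hom)
  show ?thesis
  proof
    assume L: ?L
    show ?R
    proof (intro ballI allI impI)
      fix d S assume d: "d \<in> fib \<Phi> X" and S: "S \<subseteq> hom C X Om" and fx: "S = clp S"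
        and ad: "alpha \<Phi> dO X S = d"
      have K: "Kop C \<Phi> Om dO Fo Fa ev Lam X d = alpha \<Phi> dO (Fo X) (?Li (?cl S))"
        unfolding Kop_def clo_def ad ..
      have LS: "?Li S \<subseteq> hom C (Fo X) Om" using Lift_hom[OF ef evh cat S] .
      have LcS: "?Li (?cl S) \<subseteq> hom C (Fo X) Om" using Lift_hom[OF ef evh cat clh] .
      have 1: "fle \<Phi> (Fo X) (alpha \<Phi> dO (Fo X) (?Li (?cl S))) (alpha \<Phi> dO (Fo X) (?Li S))"
        using alpha_anti[OF pf mp FX dO LcS Lift_mono[OF clo_ext[OF pf mp X dO S]]] .
      have "?Li (?cl S) \<subseteq> ?Li (clp (?cl S))" using Lift_mono[OF cl_ext[OF clh]] .
      also have "\<dots> \<subseteq> ?clF (?Li (clp S))" using L S by blast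
      also have "\<dots> = ?clF (?Li S)" by (simp only: fx[symmetric])
      finally have "?Li (?cl S) \<subseteq> ?clF (?Li S)" .
      then have "fle \<Phi> (Fo X) (alpha \<Phi> dO (Fo X) (?clF (?Li S))) (alpha \<Phi> dO (Fo X) (?Li (?cl S)))"
        by (rule alpha_anti[OF pf mp FX dO clo_hom])
      then have 2: "fle \<Phi> (Fo X) (alpha \<Phi> dO (Fo X) (?Li S)) (alpha \<Phi> dO (Fo X) (?Li (?cl S)))"
        using alpha_clo[OF pf mp FX dO LS] by simp
      show "alpha \<Phi> dO (Fo X) (?Li S) = Kop C \<Phi> Om dO Fo Fa ev Lam X d"
        unfolding K using fle_antisym[OF pf FX alpha_fib[OF pf mp FX dO LS] alpha_fib[OF pf mp FX dO LcS] 2 1] .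
    qed
  next
    assume R: ?R
    show ?L
    proof (intro allI impI)
      fix S assume S: "S \<subseteq> hom C X Om"
      define T where "T = clp S"
      have T: "T \<subseteq> hom C X Om" unfolding T_def using cl_hom[OF S] .
      have Tf: "T = clp T" unfolding T_def using cl_idem[OF S] by simp
      have eq: "alpha \<Phi> dO (Fo X) (?Li T) = Kop C \<Phi> Om dO Fo Fa ev Lam X (alpha \<Phi> dO X T)"
        using R[rule_format, OF alpha_fib[OF pf mp X dO T] T Tf refl] .
      have clT: "?cl T = ?cl S"
      proof
        have "?cl T \<subseteq> ?cl (?cl S)" using clo_mono[OF pf mp X dO clh] sub S unfolding T_def by blast
        then show "?cl T \<subseteq> ?cl S" using clo_idem[OF pf mp X dO S] by simp
        show "?cl S \<subseteq> ?cl T" using clo_mono[OF pf mp X dO T] cl_ext[OF S] unfolding T_def by blast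
      qed
      have K: "Kop C \<Phi> Om dO Fo Fa ev Lam X (alpha \<Phi> dO X T) = alpha \<Phi> dO (Fo X) (?Li (?cl S))"
        using clT unfolding Kop_def clo_def by simp
      have LcS: "?Li (?cl S) \<subseteq> hom C (Fo X) Om" using Lift_hom[OF ef evh cat clh] .
      have "clp (?cl S) \<subseteq> ?cl (?cl S)" using sub clh by blast
      also have "\<dots> = ?cl S" using clo_idem[OF pf mp X dO S] .
      finally have "?Li (clp (?cl S)) \<subseteq> ?Li (?cl S)" by (rule Lift_mono)
      also have "\<dots> \<subseteq> ?clF (?Li (?cl S))" using clo_ext[OF pf mp FX dO LcS] .
      also have "\<dots> = ?clF (?Li T)" unfolding clo_def[of C \<Phi> Om dO "Fo X"] using eq K by simp
      finally show "?Li (clp (?cl S)) \<subseteq> ?clF (?Li (clp S))" unfolding T_def .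
    qed
  qed
qed

end
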